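(* Let $\mathcal X$ and $\mathcal Y$ be nonempty compact $\beta$-strongly convex sets (with respect to norms $\|\cdot\|_{\mathcal X}$, $\|\cdot\|_{\mathcal Y}$), and let $\mathcal L:\mathcal X\times\mathcal Y\to\mathbb R$ be a differentiable convex-concave function such that $F(z):=(\nabla_x\mathcal L(z),-\nabla_y\mathcal L(z))$ satisfies $\max(\|\nabla_x\mathcal L(z)-\nabla_x\mathcal L(z')\|_{\mathcal X^*},\|\nabla_y\mathcal L(z)-\nabla_y\mathcal L(z')\|_{\mathcal Y^*})\le L\|z-z'\|_{\mathcal X\times\mathcal Y}$ for all $z,z'$. If $\min(\|\nabla_x\mathcal L(z)\|_{\mathcal X^*},\|\nabla_y\mathcal L(z)\|_{\mathcal Y^*})\ge\delta>0$ for all $z\in\mathcal X\times\mathcal Y$, then the oracle function $z\mapsto s(z):=\arg\min_{s\in\mathcal X\times\mathcal Y}\langle s,F(z)\rangle$ is well defined (the minimizer is unique) and is $\frac{4L}{\delta\beta}$-Lipschitz continuous with respect to the norm $\|(x,y)\|_{\mathcal X\times\mathcal Y}:=\|x\|_{\mathcal X}+\|y\|_{\mathcal Y}$.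
   Context: $\mathcal L$ is convex-concave if $\mathcal L(\cdot,y)$ is convex for every $y$ and $\mathcal L(x,\cdot)$ is concave for every $x$. $\|\cdot\|_{\mathcal X^*}$ denotes the dual norm of $\|\cdot\|_{\mathcal X}$ (similarly for $\mathcal Y$). A convex set $\mathcal X$ is $\beta$-strongly convex with respect to $\|\cdot\|$ if for any $x,y\in\mathcal X$ and $\gamma\in[0,1]$, the $\|\cdot\|$-ball of radius $\gamma(1-\gamma)\frac\beta2\|x-y\|^2$ centered at $\gamma x+(1-\gamma)y$ is contained in $\mathcal X$. *)

theory Defs
  imports "HOL-Analysis.Analysis"
begin

definition is_norm :: "('a::real_vector \<Rightarrow> real) \<Rightarrow> bool" where
  "is_norm N \<longleftrightarrow> (\<forall>x. 0 \<le> N x) \<and> (\<forall>x. N x = 0 \<longleftrightarrow> x = 0)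
     \<and> (\<forall>c x. N (c *\<^sub>R x) = \<bar>c\<bar> * N x) \<and> (\<forall>x y. N (x + y) \<le> N x + N y)"

definition dual_norm :: "('a::real_inner \<Rightarrow> real) \<Rightarrow> 'a \<Rightarrow> real" where
  "dual_norm N g = Sup {g \<bullet> u | u. N u \<le> 1}"

definition strongly_convex_set :: "real \<Rightarrow> ('a::real_vector \<Rightarrow> real) \<Rightarrow> 'a set \<Rightarrow> bool" where
  "strongly_convex_set \<beta> N S \<longleftrightarrow> convex S \<and>
     (\<forall>x\<in>S. \<forall>y\<in>S. \<forall>\<gamma>\<in>{0..1}.
        {w. N (w - (\<gamma> *\<^sub>R x + (1 - \<gamma>) *\<^sub>R y)) \<le> \<gamma> * (1 - \<gamma>) * (\<beta> / 2) * (N (x - y))\<^sup>2} \<subseteq> S)"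

text \<open>The linear-minimization oracle: the (unique, when it exists) minimizer of
  the linear function s \<mapsto> s \<bullet> g over S.\<close>
definition is_lmo :: "'a::real_inner set \<Rightarrow> 'a \<Rightarrow> 'a \<Rightarrow> bool" where
  "is_lmo S g s \<longleftrightarrow> s \<in> S \<and> (\<forall>t\<in>S. s \<bullet> g \<le> t \<bullet> g)"

definition lmo :: "'a::real_inner set \<Rightarrow> 'a \<Rightarrow> 'a" where
  "lmo S g = (THE s. is_lmo S g s)"

end

theory Submission imports Defs begin

lemma norm_props:
  assumes "is_norm N"
  shows "N 0 = 0" "N (-x) = N x" "N (x - y) = N (y - x)" "N (c *\<^sub>R x) = \<bar>c\<bar> * N x"
    "N (x + y) \<le> N x + N y" "0 \<le> N x" "N x = 0 \<longleftrightarrow> x = 0"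
proof -
  have h: "\<And>c x. N (c *\<^sub>R x) = \<bar>c\<bar> * N x" using assms unfolding is_norm_def by blast
  show "N 0 = 0" using assms unfolding is_norm_def by blast
  show "N (-x) = N x" using h[of "-1" x] by simp
  show "N (x - y) = N (y - x)" using h[of "-1" "x - y"] by simp
  show "N (c *\<^sub>R x) = \<bar>c\<bar> * N x" by (rule h)
  show "N (x + y) \<le> N x + N y" "0 \<le> N x" "N x = 0 \<longleftrightarrow> x = 0"
    using assms unfolding is_norm_def by blast+
qed

lemma norm_sum_le:
  assumes "is_norm N" "finite A"
  shows "N (sum f A) \<le> (\<Sum>a\<in>A. N (f a))"
  using assms(2)
proof (induction A rule: finite_induct)
  case empty then show ?case using norm_props(1)[OF assms(1)] by simp
next
  case (insert a A)
  then show ?case using norm_props(5)[OF assms(1), of "f a" "sum f A"] by simp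
qed

lemma norm_upper:
  fixes N :: "'a::euclidean_space \<Rightarrow> real"
  assumes "is_norm N"
  shows "\<exists>K\<ge>0. \<forall>x. N x \<le> K * norm x"
proof -
  define K where "K = (\<Sum>b\<in>Basis. N b)"
  have K0: "K \<ge> 0" unfolding K_def by (rule sum_nonneg) (simp add: norm_props[OF assms])
  have "N x \<le> K * norm x" for x
  proof -
    have "N x = N (\<Sum>b\<in>Basis. (x \<bullet> b) *\<^sub>R b)" by (simp add: euclidean_representation)
    also have "\<dots> \<le> (\<Sum>b\<in>Basis. N ((x \<bullet> b) *\<^sub>R b))" by (rule norm_sum_le[OF assms]) simp
    also have "\<dots> = (\<Sum>b\<in>Basis. \<bar>x \<bullet> b\<bar> * N b)" by (simp add: norm_props[OF assms])
    also have "\<dots> \<le> (\<Sum>b\<in>Basis. norm x * N b)"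
      by (rule sum_mono, rule mult_right_mono) (auto simp: Basis_le_norm norm_props[OF assms])
    also have "\<dots> = K * norm x" by (simp add: K_def sum_distrib_left mult.commute)
    finally show ?thesis .
  qed
  with K0 show ?thesis by blast
qed

lemma norm_cont:
  fixes N :: "'a::euclidean_space \<Rightarrow> real"
  assumes "is_norm N"
  shows "continuous_on S N"
proof -
  obtain K where K: "K \<ge> 0" "\<And>x. N x \<le> K * norm x" using norm_upper[OF assms] by blast
  have "K-lipschitz_on S N"
  proof (rule lipschitz_onI)
    fix x y assume "x \<in> S" "y \<in> S"
    have "N x \<le> N y + N (x - y)" using norm_props(5)[OF assms, of y "x - y"] by simp
    moreover have "N y \<le> N x + N (x - y)" using norm_props(5)[OF assms, of x "y - x"] norm_props(3)[OF assms, of x y] by simp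
    ultimately have "\<bar>N x - N y\<bar> \<le> N (x - y)" by linarith
    also have "\<dots> \<le> K * dist x y" using K(2)[of "x - y"] by (simp add: dist_norm)
    finally show "dist (N x) (N y) \<le> K * dist x y" by (simp add: dist_real_def)
  qed (rule K(1))
  then show ?thesis by (rule lipschitz_on_continuous_on)
qed

lemma norm_lower:
  fixes N :: "'a::euclidean_space \<Rightarrow> real"
  assumes "is_norm N"
  shows "\<exists>m>0. \<forall>x. m * norm x \<le> N x"
proof -
  obtain b :: 'a where b: "b \<in> Basis" using nonempty_Basis by blast
  have "b \<in> sphere (0::'a) 1" using b by (simp add: norm_Basis)
  then have ne: "sphere (0::'a) 1 \<noteq> {}" by blast
  obtain x0 where x0: "x0 \<in> sphere (0::'a) 1" "\<And>y. y \<in> sphere 0 1 \<Longrightarrow> N x0 \<le> N y"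
    using continuous_attains_inf[OF compact_sphere ne norm_cont[OF assms]] by blast
  have "x0 \<noteq> 0" using x0(1) by auto
  then have m: "N x0 > 0" using norm_props[OF assms] by (metis less_eq_real_def)
  have "N x0 * norm x \<le> N x" for x
  proof (cases "x = 0")
    case True then show ?thesis by (simp add: norm_props[OF assms])
  next
    case False
    have "N x0 \<le> N ((1 / norm x) *\<^sub>R x)" using x0(2) False by (simp add: sphere_def)
    also have "\<dots> = N x / norm x" by (simp add: norm_props[OF assms])
    finally show ?thesis using False by (simp add: field_simps)
  qed
  with m show ?thesis by blast
qed

lemma dual_bdd:
  fixes N :: "'a::euclidean_space \<Rightarrow> real"
  assumes "is_norm N"
  shows "bdd_above {g \<bullet> u | u. N u \<le> 1}"
proof -
  obtain m where m: "m > 0" "\<And>x. m * norm x \<le> N x" using norm_lower[OF assms] by blast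
  show ?thesis
  proof (rule bdd_aboveI)
    fix t assume "t \<in> {g \<bullet> u | u. N u \<le> 1}"
    then obtain u where u: "t = g \<bullet> u" "N u \<le> 1" by blast
    have "norm u \<le> 1 / m" using m(2)[of u] u(2) m(1) by (simp add: field_simps)
    have "t \<le> norm g * norm u" using u(1) norm_cauchy_schwarz by blast
    also have "\<dots> \<le> norm g * (1 / m)" by (rule mult_left_mono) (fact, simp)
    finally show "t \<le> norm g * (1 / m)" .
  qed
qed

lemma dual_ineq:
  fixes N :: "'a::euclidean_space \<Rightarrow> real"
  assumes "is_norm N"
  shows "g \<bullet> v \<le> dual_norm N g * N v"
proof (cases "v = 0")
  case True then show ?thesis by (simp add: norm_props[OF assms])
next
  case False
  then have p: "N v > 0" using norm_props[OF assms] by (metis less_eq_real_def)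
  define w where "w = (1 / N v) *\<^sub>R v"
  have "N w = 1" using p by (simp add: w_def norm_props(4)[OF assms])
  then have "g \<bullet> w \<in> {g \<bullet> u | u. N u \<le> 1}" by auto
  then have "g \<bullet> w \<le> dual_norm N g"
    unfolding dual_norm_def by (intro cSup_upper dual_bdd[OF assms])
  then have "g \<bullet> ((1 / N v) *\<^sub>R v) \<le> dual_norm N g" by (simp add: w_def)
  then show ?thesis using p by (simp add: field_simps)
qed

lemma dual_nonneg:
  fixes N :: "'a::euclidean_space \<Rightarrow> real"
  assumes "is_norm N"
  shows "0 \<le> dual_norm N g"
  unfolding dual_norm_def
  by (rule cSup_upper2[where x = 0]) (auto simp: norm_props[OF assms] intro!: dual_bdd[OF assms] exI[of _ 0])

lemma dual_zero:
  fixes N :: "'a::euclidean_space \<Rightarrow> real"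
  assumes "is_norm N"
  shows "dual_norm N 0 = 0"
proof -
  have "{(0::'a) \<bullet> u | u. N u \<le> 1} = {0}" by (auto simp: norm_props[OF assms] intro!: exI[of _ 0])
  then show ?thesis by (simp add: dual_norm_def)
qed

lemma dual_uminus:
  fixes N :: "'a::euclidean_space \<Rightarrow> real"
  assumes "is_norm N"
  shows "dual_norm N (-g) = dual_norm N g"
proof -
  have "{(-g) \<bullet> u | u. N u \<le> 1} = {g \<bullet> u | u. N u \<le> 1}"
  proof safe
    fix u assume "N u \<le> 1"
    then show "\<exists>v. -g \<bullet> u = g \<bullet> v \<and> N v \<le> 1" by (intro exI[of _ "-u"]) (simp add: norm_props[OF assms])
  next
    fix u assume "N u \<le> 1"
    then show "\<exists>v. g \<bullet> u = -g \<bullet> v \<and> N v \<le> 1" by (intro exI[of _ "-u"]) (simp add: norm_props[OF assms])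
  qed
  then show ?thesis by (simp add: dual_norm_def)
qed

lemma dual_approx:
  fixes N :: "'a::euclidean_space \<Rightarrow> real"
  assumes "is_norm N" "d < dual_norm N g"
  shows "\<exists>u. N u \<le> 1 \<and> d < g \<bullet> u"
proof -
  have ne: "{g \<bullet> u | u. N u \<le> 1} \<noteq> {}" by (auto simp: norm_props[OF assms(1)] intro!: exI[of _ 0])
  show ?thesis using assms(2) unfolding dual_norm_def less_cSup_iff[OF ne dual_bdd[OF assms(1)]] by blast
qed


lemma key:
  fixes N :: "'a::euclidean_space \<Rightarrow> real"
  assumes nN: "is_norm N" and sc: "strongly_convex_set \<beta> N S" and bp: "\<beta> > 0" and dp: "\<delta> > 0"
    and d1: "dual_norm N g1 \<ge> \<delta>" and d2: "dual_norm N g2 \<ge> \<delta>"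
    and l1: "is_lmo S g1 s1" and l2: "is_lmo S g2 s2"
  shows "N (s1 - s2) \<le> 2 * dual_norm N (g1 - g2) / (\<beta> * \<delta>)"
proof -
  define d where "d = N (s1 - s2)"
  define m where "m = (1/2) *\<^sub>R s1 + (1 - 1/2) *\<^sub>R s2"
  define r where "r = (1/2) * (1 - 1/2) * (\<beta> / 2) * (N (s1 - s2))\<^sup>2"
  have r0: "r \<ge> 0" unfolding r_def using bp by simp
  have s1S: "s1 \<in> S" and s2S: "s2 \<in> S" using l1 l2 unfolding is_lmo_def by auto
  have ball: "m - r *\<^sub>R u \<in> S" if "N u \<le> 1" for u
  proof -
    have "N ((m - r *\<^sub>R u) - m) = r * N u" using r0 by (simp add: norm_props[OF nN])
    also have "\<dots> \<le> r" using that r0 by (simp add: mult_left_le)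
    finally have "m - r *\<^sub>R u \<in> {w. N (w - ((1/2) *\<^sub>R s1 + (1 - 1/2) *\<^sub>R s2)) \<le> (1/2) * (1 - 1/2) * (\<beta> / 2) * (N (s1 - s2))\<^sup>2}"
      unfolding m_def r_def by simp
    moreover have "{w. N (w - ((1/2) *\<^sub>R s1 + (1 - 1/2) *\<^sub>R s2)) \<le> (1/2) * (1 - 1/2) * (\<beta> / 2) * (N (s1 - s2))\<^sup>2} \<subseteq> S"
    proof -
      have H: "\<forall>x\<in>S. \<forall>y\<in>S. \<forall>\<gamma>\<in>{0..1}.
        {w. N (w - (\<gamma> *\<^sub>R x + (1 - \<gamma>) *\<^sub>R y)) \<le> \<gamma> * (1 - \<gamma>) * (\<beta> / 2) * (N (x - y))\<^sup>2} \<subseteq> S"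
        using sc unfolding strongly_convex_set_def by (elim conjE)
      have h: "(1/2::real) \<in> {0..1}" by simp
      show ?thesis using bspec[OF bspec[OF bspec[OF H s1S] s2S] h] .
    qed
    ultimately show ?thesis by blast
  qed
  have gen: "r * \<delta> \<le> m \<bullet> g - s \<bullet> g"
    if ls: "is_lmo S g s" and dg: "dual_norm N g \<ge> \<delta>" for g s
  proof (rule dense_le)
    fix x assume x: "x < r * \<delta>"
    have mS: "m \<in> S" using ball[of 0] by (simp add: norm_props[OF nN])
    have base: "s \<bullet> g \<le> m \<bullet> g" using ls mS unfolding is_lmo_def by blast
    show "x \<le> m \<bullet> g - s \<bullet> g"
    proof (cases "r = 0")
      case True then show ?thesis using x base dp by simp
    next
      case False
      then have rp: "r > 0" using r0 by simp
      have "x / r < \<delta>" using x rp by (simp add: divide_less_eq mult.commute)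
      then have "x / r < dual_norm N g" using dg by linarith
      then obtain u where u: "N u \<le> 1" "x / r < g \<bullet> u" using dual_approx[OF nN] by blast
      have "s \<bullet> g \<le> (m - r *\<^sub>R u) \<bullet> g" using ls ball[OF u(1)] unfolding is_lmo_def by blast
      also have "\<dots> = m \<bullet> g - r * (g \<bullet> u)" by (simp add: inner_diff_left inner_commute[of u g])
      finally have "r * (g \<bullet> u) \<le> m \<bullet> g - s \<bullet> g" by simp
      moreover have "x < r * (g \<bullet> u)" using u(2) rp by (simp add: field_simps)
      ultimately show ?thesis by simp
    qed
  qed
  have e1: "r * \<delta> \<le> m \<bullet> g1 - s1 \<bullet> g1" by (rule gen[OF l1 d1])
  have e2: "r * \<delta> \<le> m \<bullet> g2 - s2 \<bullet> g2" by (rule gen[OF l2 d2])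
  have m1: "m \<bullet> g1 - s1 \<bullet> g1 = (1/2) * ((s2 - s1) \<bullet> g1)" unfolding m_def by (simp add: inner_diff_left algebra_simps)
  have m2: "m \<bullet> g2 - s2 \<bullet> g2 = (1/2) * ((s1 - s2) \<bullet> g2)" unfolding m_def by (simp add: inner_diff_left algebra_simps)
  have "2 * (r * \<delta>) \<le> (1/2) * ((s2 - s1) \<bullet> (g1 - g2))"
    using e1 e2 m1 m2 by (simp add: inner_diff_left inner_diff_right algebra_simps)
  also have "(s2 - s1) \<bullet> (g1 - g2) \<le> dual_norm N (g1 - g2) * N (s2 - s1)"
    using dual_ineq[OF nN, of "g1 - g2" "s2 - s1"] by (simp add: inner_commute)
  finally have main: "2 * (r * \<delta>) \<le> (1/2) * (dual_norm N (g1 - g2) * d)"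
    unfolding d_def using norm_props(3)[OF nN, of s1 s2] by simp
  have rd: "r = \<beta> / 8 * d\<^sup>2" unfolding r_def d_def by simp
  have DN0: "dual_norm N (g1 - g2) \<ge> 0" by (rule dual_nonneg[OF nN])
  show ?thesis
  proof (cases "d = 0")
    case True then show ?thesis unfolding d_def using DN0 bp dp by simp
  next
    case False
    then have dpos: "d > 0" unfolding d_def using norm_props(6)[OF nN] by (metis less_eq_real_def)
    from main have "\<beta> * \<delta> * d * d \<le> 2 * dual_norm N (g1 - g2) * d"
      unfolding rd by (simp add: power2_eq_square algebra_simps)
    then have "\<beta> * \<delta> * d \<le> 2 * dual_norm N (g1 - g2)" using dpos by simp
    then show ?thesis unfolding d_def[symmetric] using bp dp by (simp add: field_simps)
  qed
qed


lemma lmo_prod: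
  assumes "X \<noteq> {}" "Y \<noteq> {}"
  shows "is_lmo (X \<times> Y) (a, b) s \<longleftrightarrow> is_lmo X a (fst s) \<and> is_lmo Y b (snd s)"
proof
  assume h: "is_lmo (X \<times> Y) (a, b) s"
  obtain s1 s2 where s: "s = (s1, s2)" by (cases s)
  have in1: "s1 \<in> X" "s2 \<in> Y" using h s unfolding is_lmo_def by auto
  have "s1 \<bullet> a \<le> t \<bullet> a" if "t \<in> X" for t
  proof -
    have "\<forall>x\<in>X. \<forall>y\<in>Y. s1 \<bullet> a + s2 \<bullet> b \<le> x \<bullet> a + y \<bullet> b" using h unfolding is_lmo_def s by auto
    then show ?thesis using that in1 by fastforce
  qed
  moreover have "s2 \<bullet> b \<le> t \<bullet> b" if "t \<in> Y" for t
  proof -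
    have "\<forall>x\<in>X. \<forall>y\<in>Y. s1 \<bullet> a + s2 \<bullet> b \<le> x \<bullet> a + y \<bullet> b" using h unfolding is_lmo_def s by auto
    then show ?thesis using that in1 by fastforce
  qed
  ultimately show "is_lmo X a (fst s) \<and> is_lmo Y b (snd s)" using in1 s unfolding is_lmo_def by auto
next
  assume "is_lmo X a (fst s) \<and> is_lmo Y b (snd s)"
  then show "is_lmo (X \<times> Y) (a, b) s" unfolding is_lmo_def
    by (cases s) (auto simp: add_mono)
qed

lemma lmo_exists:
  fixes X :: "'a::euclidean_space set"
  assumes "compact X" "X \<noteq> {}"
  shows "\<exists>s. is_lmo X g s"
proof -
  have "continuous_on X (\<lambda>s. s \<bullet> g)" by (intro continuous_intros)
  from continuous_attains_inf[OF assms this] show ?thesis unfolding is_lmo_def by blast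
qed

lemma lmo_unique:
  fixes N :: "'a::euclidean_space \<Rightarrow> real"
  assumes nN: "is_norm N" and sc: "strongly_convex_set \<beta> N S" and bp: "\<beta> > 0" and dp: "\<delta> > 0"
    and d1: "dual_norm N g \<ge> \<delta>" and l1: "is_lmo S g s1" and l2: "is_lmo S g s2"
  shows "s1 = s2"
proof -
  have "N (s1 - s2) \<le> 2 * dual_norm N (g - g) / (\<beta> * \<delta>)" by (rule key[OF nN sc bp dp d1 d1 l1 l2])
  then have "N (s1 - s2) \<le> 0" using dual_zero[OF nN] by simp
  then show ?thesis using norm_props(6,7)[OF nN, of "s1 - s2"] by simp
qed

theorem theorem3:
  fixes X :: "'a::euclidean_space set" and Y :: "'b::euclidean_space set"
    and nX :: "'a \<Rightarrow> real" and nY :: "'b \<Rightarrow> real"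
    and \<L> :: "'a \<times> 'b \<Rightarrow> real"
    and gx :: "'a \<times> 'b \<Rightarrow> 'a" and gy :: "'a \<times> 'b \<Rightarrow> 'b"
    and \<beta> Lc \<delta> :: real
  assumes normX: "is_norm nX" and normY: "is_norm nY"
    and neX: "X \<noteq> {}" and neY: "Y \<noteq> {}"
    and cX: "compact X" and cY: "compact Y"
    and beta_pos: "\<beta> > 0"
    and scX: "strongly_convex_set \<beta> nX X" and scY: "strongly_convex_set \<beta> nY Y"
    and diff: "\<And>z. z \<in> X \<times> Y \<Longrightarrow>
        (\<L> has_derivative (\<lambda>(h, k). gx z \<bullet> h + gy z \<bullet> k)) (at z)"
    and cvx: "\<And>y. y \<in> Y \<Longrightarrow> convex_on X (\<lambda>x. \<L> (x, y))"
    and ccv: "\<And>x. x \<in> X \<Longrightarrow> concave_on Y (\<lambda>y. \<L> (x, y))"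
    and lip: "\<And>x y x' y'. x \<in> X \<Longrightarrow> y \<in> Y \<Longrightarrow> x' \<in> X \<Longrightarrow> y' \<in> Y \<Longrightarrow>
        max (dual_norm nX (gx (x, y) - gx (x', y'))) (dual_norm nY (gy (x, y) - gy (x', y')))
          \<le> Lc * (nX (x - x') + nY (y - y'))"
    and delta_pos: "\<delta> > 0"
    and grad_lb: "\<And>z. z \<in> X \<times> Y \<Longrightarrow> min (dual_norm nX (gx z)) (dual_norm nY (gy z)) \<ge> \<delta>"
  shows "(\<forall>z\<in>X \<times> Y. \<exists>!s. is_lmo (X \<times> Y) (gx z, - gy z) s)
    \<and> (\<forall>x\<in>X. \<forall>y\<in>Y. \<forall>x'\<in>X. \<forall>y'\<in>Y.
         (let s = lmo (X \<times> Y) (gx (x, y), - gy (x, y));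
              s' = lmo (X \<times> Y) (gx (x', y'), - gy (x', y'))
          in nX (fst s - fst s') + nY (snd s - snd s')
             \<le> (4 * Lc / (\<delta> * \<beta>)) * (nX (x - x') + nY (y - y'))))"
  
proof -
  have dx: "dual_norm nX (gx z) \<ge> \<delta>" if "z \<in> X \<times> Y" for z using grad_lb[OF that] by simp
  have dy: "dual_norm nY (- gy z) \<ge> \<delta>" if "z \<in> X \<times> Y" for z using grad_lb[OF that] dual_uminus[OF normY] by simp
  have uniq: "\<exists>!s. is_lmo (X \<times> Y) (gx z, - gy z) s" if z: "z \<in> X \<times> Y" for z
  proof -
    obtain s1 where s1: "is_lmo X (gx z) s1" using lmo_exists[OF cX neX] by blast
    obtain s2 where s2: "is_lmo Y (- gy z) s2" using lmo_exists[OF cY neY] by blast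
    show ?thesis
    proof (rule ex1I[of _ "(s1, s2)"])
      show "is_lmo (X \<times> Y) (gx z, - gy z) (s1, s2)" using lmo_prod[OF neX neY] s1 s2 by simp
    next
      fix t assume "is_lmo (X \<times> Y) (gx z, - gy z) t"
      then have t: "is_lmo X (gx z) (fst t)" "is_lmo Y (- gy z) (snd t)" using lmo_prod[OF neX neY] by auto
      have "fst t = s1" by (rule lmo_unique[OF normX scX beta_pos delta_pos dx[OF z] t(1) s1])
      moreover have "snd t = s2" by (rule lmo_unique[OF normY scY beta_pos delta_pos dy[OF z] t(2) s2])
      ultimately show "t = (s1, s2)" by (cases t) simp
    qed
  qed
  have comps: "is_lmo X (gx z) (fst (lmo (X \<times> Y) (gx z, - gy z))) \<and> is_lmo Y (- gy z) (snd (lmo (X \<times> Y) (gx z, - gy z)))"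
    if z: "z \<in> X \<times> Y" for z
  proof -
    have "is_lmo (X \<times> Y) (gx z, - gy z) (lmo (X \<times> Y) (gx z, - gy z))"
      unfolding lmo_def by (rule theI'[OF uniq[OF z]])
    then show ?thesis using lmo_prod[OF neX neY] by blast
  qed
  have bound: "nX (fst s - fst s') + nY (snd s - snd s')
             \<le> (4 * Lc / (\<delta> * \<beta>)) * (nX (x - x') + nY (y - y'))"
    if x: "x \<in> X" "y \<in> Y" "x' \<in> X" "y' \<in> Y"
      and s: "s = lmo (X \<times> Y) (gx (x, y), - gy (x, y))" and s': "s' = lmo (X \<times> Y) (gx (x', y'), - gy (x', y'))"
    for x y x' y' s s'
  proof -
    have z: "(x, y) \<in> X \<times> Y" "(x', y') \<in> X \<times> Y" using x by auto
    define D where "D = nX (x - x') + nY (y - y')"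
    have c: "0 \<le> 2 / (\<beta> * \<delta>)" using beta_pos delta_pos by simp
    have L: "dual_norm nX (gx (x, y) - gx (x', y')) \<le> Lc * D"
            "dual_norm nY (gy (x, y) - gy (x', y')) \<le> Lc * D"
      using lip[OF x(1-4)] unfolding D_def by auto
    have "nX (fst s - fst s') \<le> 2 * dual_norm nX (gx (x, y) - gx (x', y')) / (\<beta> * \<delta>)"
      using key[OF normX scX beta_pos delta_pos dx[OF z(1)] dx[OF z(2)]] comps[OF z(1)] comps[OF z(2)] s s' by blast
    also have "\<dots> = 2 / (\<beta> * \<delta>) * dual_norm nX (gx (x, y) - gx (x', y'))" by simp
    also have "\<dots> \<le> 2 / (\<beta> * \<delta>) * (Lc * D)" by (rule mult_left_mono[OF L(1) c])
    finally have A: "nX (fst s - fst s') \<le> 2 / (\<beta> * \<delta>) * (Lc * D)" .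
    have "nY (snd s - snd s') \<le> 2 * dual_norm nY (- gy (x, y) - - gy (x', y')) / (\<beta> * \<delta>)"
      using key[OF normY scY beta_pos delta_pos dy[OF z(1)] dy[OF z(2)]] comps[OF z(1)] comps[OF z(2)] s s' by blast
    also have "- gy (x, y) - - gy (x', y') = - (gy (x, y) - gy (x', y'))" by simp
    also have "dual_norm nY (- (gy (x, y) - gy (x', y'))) = dual_norm nY (gy (x, y) - gy (x', y'))"
      by (rule dual_uminus[OF normY])
    also have "2 * \<dots> / (\<beta> * \<delta>) = 2 / (\<beta> * \<delta>) * dual_norm nY (gy (x, y) - gy (x', y'))" by simp
    also have "\<dots> \<le> 2 / (\<beta> * \<delta>) * (Lc * D)" by (rule mult_left_mono[OF L(2) c])
    finally have B: "nY (snd s - snd s') \<le> 2 / (\<beta> * \<delta>) * (Lc * D)" .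
    have "2 / (\<beta> * \<delta>) * (Lc * D) + 2 / (\<beta> * \<delta>) * (Lc * D) = (4 * Lc / (\<delta> * \<beta>)) * D"
      by (simp add: field_simps)
    then show ?thesis using A B unfolding D_def by linarith
  qed
  show ?thesis
    using uniq bound by (auto simp: Let_def)
qed

end
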